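(* For all sufficiently large natural numbers $n$, the number of primes smaller than $n$ is greater than the number of SP numbers smaller than $n$.
   Context: A Square-Prime (SP) number is a positive integer of the form $p a^2$ where $p$ is a prime and $a \ge 2$ is a natural number (i.e. $a \neq 1$). *)

theory Defs
  imports "HOL-Computational_Algebra.Primes"
begin

definition SP :: "nat \<Rightarrow> bool" where
  "SP m \<longleftrightarrow> (\<exists>p a. prime p \<and> a \<ge> 2 \<and> m = p * a^2)"

end

theory Submission
  imports Defs "HOL-Number_Theory.Prime_Powers" "HOL-Real_Asymp.Real_Asymp"
begin

lemma ln_fact_lower: "k \<ge> 1 \<Longrightarrow> real k * ln k - k + 1 \<le> ln (fact k)"
proof (induction k rule: dec_induct)
  case base then show ?case by simp
next
  case (step k)
  have k: "real k \<ge> 1" using step by simp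
  have "real k * ln (1 + 1/real k) \<le> real k * (1/real k)"
    using k by (intro mult_left_mono ln_add_one_self_le_self) auto
  also have "\<dots> = 1" using k by simp
  finally have a: "real k * ln (1 + 1/real k) \<le> 1" .
  have "1 + 1/real k = real (Suc k) / real k" using k by (simp add: field_simps)
  then have "ln (1 + 1/real k) = ln (real (Suc k)) - ln k"
    using k by (simp add: ln_div)
  with a have b: "real k * ln (Suc k) - real k * ln k \<le> 1" by (simp add: algebra_simps)
  have "ln (fact (Suc k) :: real) = ln (Suc k) + ln (fact k)"
    by (simp add: ln_mult)
  then show ?case using step.IH b by (simp add: algebra_simps)
qed

lemma ln_fact_upper: "ln (fact k) \<le> real (k+1) * ln (k+1) - k"
proof (induction k)
  case 0 then show ?case by simp
next
  case (Suc k)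
  have k: "real k + 1 \<ge> 1" by simp
  have "1 / (real k + 2) \<le> ln (1 + 1/(real k + 1))"
  proof -
    have "ln (1 + 1/(real k + 1)) = - ln ((real k + 1)/(real k + 2))"
      by (simp add: ln_div field_simps)
    also have "\<dots> \<ge> - ((real k + 1)/(real k + 2) - 1)"
      by (intro le_imp_neg_le ln_le_minus_one) auto
    finally show ?thesis by (simp add: field_simps)
  qed
  then have c: "1 \<le> (real k + 2) * ln (1 + 1/(real k + 1))" by (simp add: field_simps)
  have "1 + 1/(real k + 1) = (real k + 2) / (real k + 1)" by (simp add: field_simps)
  then have e: "ln (1 + 1/(real k + 1)) = ln (real k + 2) - ln (real k + 1)"
    by (simp add: ln_div)
  have "1 \<le> (real k + 2) * (ln (real k + 2) - ln (real k + 1))" using c unfolding e .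
  then have b: "1 \<le> (real k + 2) * ln (real k + 2) - (real k + 2) * ln (real k + 1)"
    by (simp add: right_diff_distrib)
  have "ln (fact (Suc k) :: real) = ln (Suc k) + ln (fact k)"
    by (simp add: ln_mult)
  then show ?case using Suc.IH b by (simp add: algebra_simps)
qed



lemma r30: fixes r :: nat shows "r < 30 \<Longrightarrow> r = 0 \<or> r = 1 \<or> r = 2 \<or> r = 3 \<or> r = 4 \<or> r = 5 \<or> r = 6 \<or> r = 7 \<or> r = 8 \<or> r = 9 \<or> r = 10 \<or> r = 11 \<or> r = 12 \<or> r = 13 \<or> r = 14 \<or> r = 15 \<or> r = 16 \<or> r = 17 \<or> r = 18 \<or> r = 19 \<or> r = 20 \<or> r = 21 \<or> r = 22 \<or> r = 23 \<or> r = 24 \<or> r = 25 \<or> r = 26 \<or> r = 27 \<or> r = 28 \<or> r = 29"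
  by presburger
lemma g_small: fixes r :: nat
  shows "r < 30 \<Longrightarrow> r div 2 + r div 3 + r div 5 \<le> r \<and> r \<le> r div 2 + r div 3 + r div 5 + 1"
  by (drule r30) (elim disjE; simp)
lemma g_range_nat: fixes k :: nat
  shows "k div 2 + k div 3 + k div 5 \<le> k + k div 30 \<and> k + k div 30 \<le> k div 2 + k div 3 + k div 5 + 1"
proof -
  define q r where "q = k div 30" and "r = k mod 30"
  have r: "r < 30" unfolding r_def by simp
  have k: "k = r + 30 * q" unfolding q_def r_def by simp
  have "k div 2 = r div 2 + 15 * q" unfolding k by simp
  moreover have "k div 3 = r div 3 + 10 * q" unfolding k by simp
  moreover have "k div 5 = r div 5 + 6 * q" unfolding k by simp
  moreover have "k div 30 = q" unfolding q_def ..
  ultimately show ?thesis using g_small[OF r] k by simp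
qed
lemma g_one_nat: fixes k :: nat
  shows "1 \<le> k \<Longrightarrow> k \<le> 5 \<Longrightarrow> k + k div 30 = k div 2 + k div 3 + k div 5 + 1"
proof -
  assume "1 \<le> k" "k \<le> 5"
  then have "k = 1 \<or> k = 2 \<or> k = 3 \<or> k = 4 \<or> k = 5" by linarith
  then show ?thesis by (elim disjE; simp)
qed

definition Sf :: "real \<Rightarrow> real" where "Sf x = x * ln x - x"

lemma Sf_diff:
  assumes "0 < x" "x \<le> y"
  shows "(y - x) * ln x \<le> Sf y - Sf x" "Sf y - Sf x \<le> (y - x) * ln y"
proof -
  have y: "y > 0" using assms by simp
  have "ln (y/x) \<le> y/x - 1" using assms by (intro ln_le_minus_one) auto
  then have "x * ln (y/x) \<le> x * (y/x - 1)" using assms by (intro mult_left_mono) auto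
  moreover have "ln (y/x) = ln y - ln x" using assms y by (simp add: ln_div)
  moreover have "x * (y/x - 1) = y - x" using assms by (simp add: field_simps)
  ultimately have "x * (ln y - ln x) \<le> y - x" by simp
  then show "Sf y - Sf x \<le> (y - x) * ln y" unfolding Sf_def by (simp add: algebra_simps)
  have "ln (x/y) \<le> x/y - 1" using assms by (intro ln_le_minus_one) auto
  then have "y * ln (x/y) \<le> y * (x/y - 1)" using y by (intro mult_left_mono) auto
  moreover have "ln (x/y) = ln x - ln y" using assms y by (simp add: ln_div)
  moreover have "y * (x/y - 1) = x - y" using y by (simp add: field_simps)
  ultimately have "y * (ln x - ln y) \<le> x - y" by simp
  then show "(y - x) * ln x \<le> Sf y - Sf x" unfolding Sf_def by (simp add: algebra_simps)
qed

definition Tf :: "real \<Rightarrow> real" where "Tf x = ln (fact (nat \<lfloor>x\<rfloor>))"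

lemma Tf_bounds:
  assumes "x \<ge> 0"
  shows "\<bar>Tf x - Sf x\<bar> \<le> ln (x + 1) + 1"
proof (cases "x \<ge> 1")
  case True
  define k where "k = nat \<lfloor>x\<rfloor>"
  have k1: "k \<ge> 1" using True unfolding k_def by linarith
  have kx: "real k \<le> x" "x < real k + 1" unfolding k_def using True by linarith+
  have T: "Tf x = ln (fact k)" unfolding Tf_def k_def ..
  have lx: "0 \<le> ln x" using True by simp
  have lx1: "ln x \<le> ln (x + 1)" using True by simp
  have l1: "0 \<le> ln (real k + 1)" by simp
  have lk: "ln (real k + 1) \<le> ln (x + 1)" using kx k1 by simp
  have lo: "real k * ln k - k + 1 \<le> ln (fact k)" using ln_fact_lower[OF k1] .
  have up: "ln (fact k) \<le> real (k+1) * ln (real k+1) - k" using ln_fact_upper .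
  have d1: "Sf x - Sf k \<le> (x - k) * ln x" using Sf_diff(2)[of k x] k1 kx by simp
  have d2: "Sf (real k + 1) - Sf x \<le> (real k + 1 - x) * ln (real k + 1)"
    using Sf_diff(2)[of x "real k + 1"] True kx by simp
  have e1: "(x - k) * ln x \<le> ln x" using kx lx by (intro mult_left_le_one_le) auto
  have e2: "(real k + 1 - x) * ln (real k + 1) \<le> ln (real k + 1)"
    using kx l1 by (intro mult_left_le_one_le) auto
  have "Tf x \<ge> Sf x - ln (x+1) - 1"
    using T lo d1 e1 lx1 unfolding Sf_def by simp
  moreover have "Tf x \<le> Sf x + ln (x+1) + 1"
    using T up d2 e2 lk unfolding Sf_def by (simp add: algebra_simps)
  ultimately show ?thesis by linarith
next
  case False
  then have T: "Tf x = 0" unfolding Tf_def using assms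
    by (simp add: floor_eq_iff)
  have l0: "0 \<le> ln (x+1)" using assms by simp
  show ?thesis
  proof (cases "x = 0")
    case True then show ?thesis using T unfolding Sf_def by simp
  next
    case x0: False
    then have xp: "x > 0" using assms by simp
    have "ln x \<le> 0" using False xp by simp
    then have a: "x * ln x \<le> 0" using xp by (simp add: mult_nonneg_nonpos)
    have "ln (1/x) \<le> 1/x - 1" using xp by (intro ln_le_minus_one) auto
    then have "- ln x \<le> 1/x - 1" using xp by (simp add: ln_div)
    then have "x * (- ln x) \<le> x * (1/x - 1)" using xp by (intro mult_left_mono) auto
    moreover have "x * (1/x - 1) = 1 - x" using xp by (simp add: field_simps)
    ultimately have b: "x * ln x \<ge> x - 1" by simp
    show ?thesis using T a b l0 xp unfolding Sf_def abs_le_iff by linarith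
  qed
qed

definition Acon :: real where
  "Acon = ln 2 / 2 + ln 3 / 3 + ln 5 / 5 - ln 30 / 30"

lemma Acon_pos: "Acon > 0"
proof -
  have "ln (30::real) = ln (2*3*5)" by simp
  also have "\<dots> = ln 2 + ln 3 + ln 5" by (simp only: ln_mult) simp_all
  finally have "ln (30::real) = ln 2 + ln 3 + ln 5" .
  moreover have "ln (2::real) > 0" "ln (3::real) > 0" "ln (5::real) > 0" by simp_all
  ultimately show ?thesis unfolding Acon_def by linarith
qed

definition Ff :: "nat \<Rightarrow> real" where
  "Ff N = Tf N - Tf (N/2) - Tf (N/3) - Tf (N/5) + Tf (N/30)"

lemma Sf_comb:
  fixes N :: nat
  assumes "N > 0"
  shows "Sf N - Sf (N/2) - Sf (N/3) - Sf (N/5) + Sf (N/30) = Acon * N"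
proof -
  have l: "ln (real N / c) = ln N - ln c" if "c > 0" for c :: real
    using assms that by (simp add: ln_div)
  note l2 = l[of 2, simplified] and l3 = l[of 3, simplified] and l5 = l[of 5, simplified]
    and l30 = l[of 30, simplified]
  have "ln (30::real) = ln (2*3*5)" by simp
  also have "\<dots> = ln 2 + ln 3 + ln 5" by (simp only: ln_mult) simp_all
  finally have "ln (30::real) = ln 2 + ln 3 + ln 5" .
  then show ?thesis unfolding Sf_def Acon_def l2 l3 l5 l30
    by (simp add: field_simps)
qed

lemma Ff_approx: "\<bar>Ff N - Acon * N\<bar> \<le> 5 * (ln (real N + 1) + 1)"
proof (cases "N = 0")
  case True then show ?thesis by (simp add: Ff_def Tf_def)
next
  case False
  have b: "\<bar>Tf (N/c) - Sf (N/c)\<bar> \<le> ln (real N + 1) + 1" if "c \<ge> 1" for c :: real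
  proof -
    have "\<bar>Tf (N/c) - Sf (N/c)\<bar> \<le> ln (N/c + 1) + 1" using that by (intro Tf_bounds) auto
    also have "ln (N/c + 1) \<le> ln (real N + 1)"
    proof -
      have "real N / c \<le> real N" using that by (simp add: divide_le_eq mult_le_cancel_left1)
      moreover have "0 < real N / c + 1" using that by (simp add: add_nonneg_pos)
      ultimately show ?thesis by simp
    qed
    finally show ?thesis by simp
  qed
  have b1: "\<bar>Tf N - Sf N\<bar> \<le> ln (real N + 1) + 1" using b[of 1] by simp
  have pos: "N > 0" using False by simp
  show ?thesis
    unfolding Ff_def abs_le_iff
    apply (insert b[of 2, OF one_le_numeral] b[of 3, OF one_le_numeral] 
    b[of 5, OF one_le_numeral] b[of 30, OF one_le_numeral] b1 Sf_comb[OF pos])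
    apply (unfold abs_le_iff)
    apply (elim conjE)
    apply (intro conjI)
    apply (smt (verit))+
    done
qed



lemma ln_fact_mangoldt:
  "ln (fact N :: real) = (\<Sum>d\<in>{1..N}. mangoldt d * real (N div d))"
proof (induction N)
  case 0 then show ?case by simp
next
  case (Suc N)
  have f: "ln (fact (Suc N) :: real) = ln (real (Suc N)) + ln (fact N)"
    by (simp add: ln_mult)
  have m: "ln (real (Suc N)) = (\<Sum>d | d dvd Suc N. mangoldt d :: real)"
    using mangoldt_sum[of "Suc N", where ?'a = real] by simp
  have pos: "d \<ge> 1" if "d dvd Suc N" for d
    using that by (cases d) auto
  have s1: "{d. d dvd Suc N} = {d \<in> {1..Suc N}. d dvd Suc N}"
    using pos by (auto dest: dvd_imp_le)
  have m2: "(\<Sum>d | d dvd Suc N. mangoldt d :: real) =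
      (\<Sum>d\<in>{1..Suc N}. mangoldt d * (if d dvd Suc N then 1 else 0))"
    unfolding s1 sum.inter_filter[OF finite_atLeastAtMost] by (intro sum.cong) auto
  have sp: "(\<Sum>d\<in>{1..Suc N}. mangoldt d * real (N div d)) = (\<Sum>d\<in>{1..N}. mangoldt d * real (N div d))"
    by (simp add: sum.atLeast_Suc_atMost_Suc_shift) 
  have dv: "real (Suc N div d) = real (N div d) + (if d dvd Suc N then 1 else 0)" for d
    by (simp add: div_Suc dvd_eq_mod_eq_0)
  have "(\<Sum>d\<in>{1..Suc N}. mangoldt d * real (Suc N div d)) =
        (\<Sum>d\<in>{1..Suc N}. mangoldt d * real (N div d)) + (\<Sum>d\<in>{1..Suc N}. mangoldt d * (if d dvd Suc N then 1 else 0))"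
    unfolding dv by (simp add: distrib_left sum.distrib)
  then show ?case using f m m2 sp Suc.IH by simp
qed


definition psi :: "nat \<Rightarrow> real" where "psi N = (\<Sum>d\<in>{1..N}. mangoldt d)"

lemma Tf_numeral: "Tf (real N / numeral k) = ln (fact (N div numeral k))"
proof -
  have "\<lfloor>real N / numeral k\<rfloor> = int (N div numeral k)"
    using floor_divide_of_nat_eq[of N "numeral k"] by simp
  then show ?thesis unfolding Tf_def by simp
qed

lemma ln_fact_div:
  assumes "a > 0"
  shows "ln (fact (N div a) :: real) = (\<Sum>d\<in>{1..N}. mangoldt d * real (N div d div a))"
proof -
  have e: "N div a div d = N div d div a" for d
    by (metis div_mult2_eq mult.commute)
  have "ln (fact (N div a) :: real) = (\<Sum>d\<in>{1..N div a}. mangoldt d * real (N div d div a))"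
    unfolding ln_fact_mangoldt e ..
  also have "\<dots> = (\<Sum>d\<in>{1..N}. mangoldt d * real (N div d div a))"
  proof (intro sum.mono_neutral_left)
    show "{1..N div a} \<subseteq> {1..N}" using assms by (auto intro: order_trans[OF _ div_le_dividend])
    have z: "N div i div a = 0" if "N div a < i" for i
      using that by (metis e div_less)
    show "\<forall>i\<in>{1..N} - {1..N div a}. mangoldt i * real (N div i div a) = 0"
      using z by auto
  qed auto
  finally show ?thesis .
qed

definition gR :: "nat \<Rightarrow> real" where
  "gR k = real k - real (k div 2) - real (k div 3) - real (k div 5) + real (k div 30)"

lemma gR_range: "0 \<le> gR k" "gR k \<le> 1"
proof -
  from g_range_nat[of k] have h1: "k div 2 + k div 3 + k div 5 \<le> k + k div 30"
    and h2: "k + k div 30 \<le> k div 2 + k div 3 + k div 5 + 1" by auto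
  from of_nat_mono[OF h1, where ?'a=real] of_nat_mono[OF h2, where ?'a=real] have
    "real (k div 2) + real (k div 3) + real (k div 5) \<le> real k + real (k div 30)"
    "real k + real (k div 30) \<le> real (k div 2) + real (k div 3) + real (k div 5) + 1"
    unfolding of_nat_add of_nat_1 by auto
  then show "0 \<le> gR k" "gR k \<le> 1" unfolding gR_def by linarith+
qed

lemma gR_one: "1 \<le> k \<Longrightarrow> k \<le> 5 \<Longrightarrow> gR k = 1"
proof -
  assume "1 \<le> k" "k \<le> 5"
  from arg_cong[OF g_one_nat[OF this], of real] have
    "real k + real (k div 30) = real (k div 2) + real (k div 3) + real (k div 5) + 1"
    unfolding of_nat_add of_nat_1 .
  then show ?thesis unfolding gR_def by linarith
qed

lemma Ff_sum: "Ff N = (\<Sum>d\<in>{1..N}. mangoldt d * gR (N div d))"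
proof -
  have "Ff N = ln (fact N) - ln (fact (N div 2)) - ln (fact (N div 3)) - ln (fact (N div 5))
     + ln (fact (N div 30))"
    unfolding Ff_def Tf_numeral by (simp add: Tf_def)
  also have "\<dots> = (\<Sum>d\<in>{1..N}. mangoldt d * gR (N div d))"
    unfolding ln_fact_div[of 2 N, OF zero_less_numeral] ln_fact_div[of 3 N, OF zero_less_numeral]
      ln_fact_div[of 5 N, OF zero_less_numeral] ln_fact_div[of 30 N, OF zero_less_numeral] 
      ln_fact_mangoldt[of N] gR_def
    by (simp add: algebra_simps sum.distrib sum_subtractf)
  finally show ?thesis .
qed

lemma Ff_le_psi: "Ff N \<le> psi N"
  unfolding Ff_sum psi_def
  by (intro sum_mono) (auto intro: mult_left_le mangoldt_nonneg gR_range)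

lemma psi_split: "psi N = psi (N div 6) + (\<Sum>d\<in>{N div 6 + 1..N}. mangoldt d)"
proof -
  have "{1..N} = {1..N div 6} \<union> {N div 6 + 1..N}" by auto
  then show ?thesis unfolding psi_def by (simp add: sum.union_disjoint[symmetric] ivl_disj_int)
qed

lemma psi_diff_le_Ff: "psi N - psi (N div 6) \<le> Ff N"
proof -
  have "psi N - psi (N div 6) = (\<Sum>d\<in>{N div 6 + 1..N}. mangoldt d * gR (N div d))"
  proof -
    have "gR (N div d) = 1" if "d \<in> {N div 6 + 1..N}" for d
    proof (intro gR_one)
      from that have d: "d > 0" "d \<le> N" "N div 6 < d" by auto
      show "1 \<le> N div d" using d by (simp add: less_eq_div_iff_mult_less_eq[OF d(1)])
      have "N < 6 * d" using d(3) by (simp add: div_less_iff_less_mult mult.commute)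
      then have "N div d < 6" using d(1) by (simp add: div_less_iff_less_mult mult.commute)
      then show "N div d \<le> 5" by simp
    qed
    then show ?thesis using psi_split[of N] by simp
  qed
  also have "\<dots> \<le> (\<Sum>d\<in>{1..N}. mangoldt d * gR (N div d))"
    by (intro sum_mono2) (auto intro: mult_nonneg_nonneg mangoldt_nonneg gR_range)
  finally show ?thesis unfolding Ff_sum .
qed

lemma psi_lower: "psi N \<ge> Acon * N - 5 * (ln (real N + 1) + 1)"
  using Ff_le_psi[of N] Ff_approx[of N] by (simp add: abs_le_iff)

lemma psi_nonneg: "psi N \<ge> 0"
  unfolding psi_def by (intro sum_nonneg) (auto intro: mangoldt_nonneg)

lemma ln_sqrt_bound: "N \<ge> 1 \<Longrightarrow> 5 * (ln (real N + 1) + 1) \<le> 15 * sqrt N"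
proof -
  assume N: "N \<ge> 1"
  have s: "sqrt (real N + 1) > 0" by simp
  have "ln (real N + 1) = 2 * ln (sqrt (real N + 1))"
    by (simp add: ln_sqrt)
  also have "\<dots> \<le> 2 * (sqrt (real N + 1) - 1)"
    using ln_le_minus_one[OF s] by simp
  finally have a: "ln (real N + 1) \<le> 2 * sqrt (real N + 1) - 2" by simp
  have "sqrt (real N + 1) \<le> sqrt (9/4 * real N)" using N by (intro real_sqrt_le_mono) simp
  also have "\<dots> = 3/2 * sqrt N" by (simp add: real_sqrt_mult real_sqrt_divide)
  finally show ?thesis using a by simp
qed

lemma psi_upper: "psi N \<le> 6/5 * Acon * N + 30 * sqrt N"
proof (induction N rule: less_induct)
  case (less N)
  show ?case
  proof (cases "N = 0")
    case True then show ?thesis by (simp add: psi_def)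
  next
    case False
    then have N: "N \<ge> 1" by simp
    have lt: "N div 6 < N" using False by simp
    have IH: "psi (N div 6) \<le> 6/5 * Acon * real (N div 6) + 30 * sqrt (real (N div 6))"
      using less.IH[OF lt] .
    have d1: "real (N div 6) \<le> real N / 6" using of_nat_div_le_of_nat[of N 6] by simp
    have "sqrt (real (N div 6)) \<le> sqrt (real N / 4)"
      using d1 by (intro real_sqrt_le_mono) simp
    also have "\<dots> = sqrt N / 2" by (simp add: real_sqrt_divide)
    finally have d2: "sqrt (real (N div 6)) \<le> sqrt N / 2" .
    have A: "Acon > 0" by (rule Acon_pos)
    have "6/5 * Acon * real (N div 6) \<le> 6/5 * Acon * (real N / 6)"
      using d1 A by (intro mult_left_mono) auto
    then have "psi N \<le> Acon * N + 15 * sqrt N + 6/5 * Acon * (real N / 6) + 30 * (sqrt N / 2)"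
      using psi_diff_le_Ff[of N] Ff_approx[of N] ln_sqrt_bound[OF N] IH d2
      by (simp add: abs_le_iff)
    then show ?thesis by simp
  qed
qed



lemma fiber_bound:
  fixes p N :: nat
  assumes p: "prime p" and F: "F \<subseteq> {d. primepow d \<and> aprimedivisor d = p \<and> d \<le> N}"
  shows "real (card F) * ln p \<le> ln N"
proof -
  define K where "K = {k. 0 < k \<and> p ^ k \<le> N}"
  have p2: "p \<ge> 2" using p by (rule prime_ge_2_nat)
  have kle: "k \<le> N" if "k \<in> K" for k
  proof -
    have "k < 2 ^ k" by (rule less_exp)
    also have "2 ^ k \<le> p ^ k" using p2 by (rule power_mono) simp
    also have "p ^ k \<le> N" using that unfolding K_def by simp
    finally show ?thesis by simp
  qed
  have finK: "finite K" using kle by (intro finite_subset[of K "{..N}"]) auto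
  have sub: "F \<subseteq> (\<lambda>k. p ^ k) ` K"
  proof
    fix d assume d: "d \<in> F"
    then have pp: "primepow d" and ad: "aprimedivisor d = p" and dN: "d \<le> N" using F by auto
    have d1: "d > Suc 0" using pp by (rule primepow_gt_Suc_0)
    have e: "p ^ multiplicity p d = d" using primepow_decompose[OF pp] ad by simp
    have m: "multiplicity p d > 0" using multiplicity_aprimedivisor_gt_0_nat[OF d1] ad by simp
    show "d \<in> (\<lambda>k. p ^ k) ` K"
      unfolding K_def using e m dN by (intro image_eqI[of _ _ "multiplicity p d"]) auto
  qed
  have finF: "finite F" by (rule finite_subset[OF sub finite_imageI[OF finK]])
  have cF: "card F \<le> card K"
    using card_mono[OF finite_imageI[OF finK] sub] card_image_le[OF finK, of "\<lambda>k. p ^ k"] by linarith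
  show ?thesis
  proof (cases "K = {}")
    case True
    then have "F = {}" using sub by auto
    moreover have "ln (real N) \<ge> 0 \<or> N = 0" by (cases N) auto
    ultimately show ?thesis by auto
  next
    case False
    define m where "m = Max K"
    have mK: "m \<in> K" unfolding m_def using finK False by (rule Max_in)
    have Ksub: "K \<subseteq> {1..m}" unfolding m_def using finK by (auto simp: K_def Suc_le_eq)
    have "card K \<le> m" using card_mono[OF _ Ksub] by simp
    then have cm: "card F \<le> m" using cF by simp
    have pm: "p ^ m \<le> N" "0 < p ^ m" using mK p2 unfolding K_def by auto
    have lp: "ln (real p) \<ge> 0" using p2 by simp
    have "real (card F) * ln p \<le> real m * ln p" using cm lp by (intro mult_right_mono) auto
    also have "\<dots> = ln (real (p ^ m))" by (simp add: ln_realpow)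
    also have "\<dots> \<le> ln N"
    proof -
      have "real (p ^ m) \<le> real N" using pm(1) by (rule of_nat_mono)
      moreover have "real (p ^ m) > 0" using pm(2) by simp
      ultimately show ?thesis by (rule ln_mono)
    qed
    finally show ?thesis .
  qed
qed

lemma psi_le_pi: "psi N \<le> real (card {p. p \<le> N \<and> prime p}) * ln N"
proof -
  define D where "D = {d \<in> {1..N}. primepow d}"
  have finD: "finite D" unfolding D_def by simp
  have "psi N = (\<Sum>d\<in>D. ln (real (aprimedivisor d)))"
    unfolding psi_def D_def sum.inter_filter[OF finite_atLeastAtMost]
    by (intro sum.cong) (auto simp: mangoldt_def)
  also have "\<dots> = (\<Sum>q\<in>aprimedivisor ` D. \<Sum>d\<in>{x\<in>D. aprimedivisor x = q}. ln (real (aprimedivisor d)))"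
    by (rule sum.image_gen[OF finD])
  also have "\<dots> \<le> (\<Sum>q\<in>aprimedivisor ` D. ln N)"
  proof (intro sum_mono)
    fix q assume q: "q \<in> aprimedivisor ` D"
    then obtain d0 where d0: "d0 \<in> D" "q = aprimedivisor d0" by auto
    have pq: "prime q" using d0 unfolding D_def
      by (auto intro: prime_aprimedivisor' dest: primepow_gt_Suc_0)
    have "(\<Sum>d\<in>{x\<in>D. aprimedivisor x = q}. ln (real (aprimedivisor d))) =
          real (card {x\<in>D. aprimedivisor x = q}) * ln q" by simp
    also have "\<dots> \<le> ln N"
      by (rule fiber_bound[OF pq]) (auto simp: D_def)
    finally show "(\<Sum>d\<in>{x\<in>D. aprimedivisor x = q}. ln (real (aprimedivisor d))) \<le> ln N" .
  qed
  also have "\<dots> = real (card (aprimedivisor ` D)) * ln N" by simp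
  also have "\<dots> \<le> real (card {p. p \<le> N \<and> prime p}) * ln N"
  proof (intro mult_right_mono)
    have "aprimedivisor ` D \<subseteq> {p. p \<le> N \<and> prime p}"
    proof
      fix q assume "q \<in> aprimedivisor ` D"
      then obtain d where d: "d \<in> D" "q = aprimedivisor d" by auto
      have d1: "d > Suc 0" using d unfolding D_def by (auto dest: primepow_gt_Suc_0)
      have "q \<le> d" using aprimedivisor_le_nat[OF d1] d by simp
      moreover have "prime q" using d d1 by (auto intro: prime_aprimedivisor')
      ultimately show "q \<in> {p. p \<le> N \<and> prime p}" using d unfolding D_def by auto
    qed
    then show "real (card (aprimedivisor ` D)) \<le> real (card {p. p \<le> N \<and> prime p})"
      by (intro of_nat_mono card_mono) auto
    show "0 \<le> ln (real N)" by (cases N) auto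
  qed
  finally show ?thesis .
qed



lemma inv_sq_tail_aux:
  assumes c: "2 \<le> c" and B: "c - 1 \<le> B"
  shows "(\<Sum>a\<in>{c..B}. 1 / real a ^ 2) \<le> 1 / (real c - 1) - 1 / real B"
  using B
proof (induction B rule: dec_induct)
  case base
  have "{c..c-1} = {}" using c by auto
  then show ?case using c by (simp add: of_nat_diff)
next
  case (step B)
  have B1: "B \<ge> 1" using step c by simp
  have "{c..Suc B} = insert (Suc B) {c..B}" using step c by auto
  then have "(\<Sum>a\<in>{c..Suc B}. 1 / real a ^ 2) = 1 / real (Suc B) ^ 2 + (\<Sum>a\<in>{c..B}. 1 / real a ^ 2)"
    by simp
  also have "\<dots> \<le> 1 / real (Suc B) ^ 2 + (1 / (real c - 1) - 1 / real B)"
    using step.IH by simp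
  also have "1 / real (Suc B) ^ 2 \<le> 1 / real B - 1 / real (Suc B)"
  proof -
    have e: "1 / real B - 1 / real (Suc B) = 1 / (real B * real (Suc B))"
      using B1 by (simp add: field_simps)
    have "real B * real (Suc B) \<le> real (Suc B) ^ 2"
      by (simp add: power2_eq_square)
    then have "1 / real (Suc B) ^ 2 \<le> 1 / (real B * real (Suc B))"
      using B1 by (intro frac_le) auto
    then show ?thesis using e by simp
  qed
  finally show ?case by simp
qed

lemma inv_sq_tail:
  assumes c: "2 \<le> c"
  shows "(\<Sum>a\<in>{c..B}. 1 / real a ^ 2) \<le> 1 / (real c - 1)"
proof (cases "c - 1 \<le> B")
  case True
  have "real B > 0" using True c by simp
  then have "1 / real B \<ge> 0" by simp
  then show ?thesis using inv_sq_tail_aux[OF c True] by linarith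
next
  case False
  then have "{c..B} = {}" by auto
  then show ?thesis using c by simp
qed

lemma inv_sq_head:
  assumes c: "4 \<le> c"
  shows "(\<Sum>a\<in>{2..<c}. 1 / real a ^ 2) \<le> 25/36"
proof -
  have "(\<Sum>a\<in>{2..<c}. 1 / real a ^ 2) \<le> (\<Sum>a\<in>{2..c}. 1 / real a ^ 2)"
    by (intro sum_mono2) auto
  also have "{2..c} = {2,3} \<union> {4..c}" using c by auto
  also have "(\<Sum>a\<in>{2,3} \<union> {4..c}. 1 / real a ^ 2) = 1/4 + 1/9 + (\<Sum>a\<in>{4..c}. 1 / real a ^ 2)"
    by (subst sum.union_disjoint) auto
  also have "(\<Sum>a\<in>{4..c}. 1 / real a ^ 2) \<le> 1/3"
    using inv_sq_tail[of 4 c] by simp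
  finally show ?thesis by simp
qed

lemma theta_le_psi: "(\<Sum>p\<in>{p. p \<le> N \<and> prime p}. ln (real p)) \<le> psi N"
proof -
  have "(\<Sum>p\<in>{p. p \<le> N \<and> prime p}. ln (real p)) = (\<Sum>p\<in>{p. p \<le> N \<and> prime p}. mangoldt p)"
    by (intro sum.cong) auto
  also have "\<dots> \<le> psi N" unfolding psi_def
    by (intro sum_mono2) (auto intro: mangoldt_nonneg simp: Suc_le_eq prime_gt_0_nat)
  finally show ?thesis .
qed

lemma pi_lower:
  assumes n: "n \<ge> 2"
  shows "psi (n - 1) \<le> real (card {p. p < n \<and> prime p}) * ln n"
proof -
  have e: "{p. p < n \<and> prime p} = {p. p \<le> n - 1 \<and> prime p}" using n by auto
  have "psi (n - 1) \<le> real (card {p. p < n \<and> prime p}) * ln (real (n - 1))"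
    using psi_le_pi[of "n-1"] unfolding e .
  also have "\<dots> \<le> real (card {p. p < n \<and> prime p}) * ln n"
    using n by (intro mult_left_mono) auto
  finally show ?thesis .
qed


lemma SP_count:
  assumes M: "M \<ge> 4" and X: "X > 1"
  shows "real (card {m. m < n \<and> SP m}) \<le> real n / (M - 1) + (X + 1) * (M + 1)
           + (5/6 * Acon * real n + 30 * (M + 1) * sqrt (real n)) / ln X"
proof -
  define Q where "Q = {(a,p). 2 \<le> a \<and> prime p \<and> p * a^2 < n}"
  have Qsub: "Q \<subseteq> {..<n} \<times> {..<n}"
  proof
    fix x assume "x \<in> Q"
    then obtain a p where x: "x = (a,p)" "2 \<le> a" "prime p" "p * a^2 < n" unfolding Q_def by auto
    have p1: "p \<ge> 1" using x(3) prime_ge_1_nat by auto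
    have "a \<le> a^2" by (simp add: power2_eq_square)
    also have "a^2 \<le> p * a^2" using p1 by simp
    finally have "a < n" using x(4) by simp
    moreover have pa: "p \<le> p * a^2" using x(2) by simp
    have "p < n" using pa x(4) by (rule le_less_trans)
    ultimately show "x \<in> {..<n} \<times> {..<n}" using x by auto
  qed
  have finQ: "finite Q" using Qsub by (rule finite_subset) auto
  have "{m. m < n \<and> SP m} \<subseteq> (\<lambda>(a,p). p * a^2) ` Q"
  proof
    fix m assume "m \<in> {m. m < n \<and> SP m}"
    then obtain p a where "prime p" "a \<ge> 2" "m = p * a^2" "m < n" unfolding SP_def by auto
    then show "m \<in> (\<lambda>(a,p). p * a^2) ` Q" unfolding Q_def by (intro image_eqI[of _ _ "(a,p)"]) auto
  qed
  then have cSP: "card {m. m < n \<and> SP m} \<le> card Q"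
    using card_mono[OF finite_imageI[OF finQ]] card_image_le[OF finQ] le_trans by blast
  define c where "c = nat \<lceil>M\<rceil>"
  have c4: "c \<ge> 4" unfolding c_def using M by linarith
  have cM: "real c \<le> M + 1" "M \<le> real c" unfolding c_def using M by linarith+
  define Q1 where "Q1 = {x\<in>Q. c \<le> fst x}"
  define Q2 where "Q2 = {x\<in>Q. fst x < c \<and> real (snd x) \<le> X}"
  define Q3 where "Q3 = {x\<in>Q. fst x < c \<and> X < real (snd x)}"
  have "Q = Q1 \<union> Q2 \<union> Q3" unfolding Q1_def Q2_def Q3_def by auto
  then have cQ0: "card Q \<le> card (Q1 \<union> Q2) + card Q3"
    by (simp only: card_Un_le)
  have "card (Q1 \<union> Q2) \<le> card Q1 + card Q2" by (rule card_Un_le)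
  with cQ0 have cQ: "card Q \<le> card Q1 + card Q2 + card Q3" by linarith
  have fin1: "finite Q1" "finite Q2" "finite Q3" unfolding Q1_def Q2_def Q3_def using finQ by auto

  have Q1sub: "Q1 \<subseteq> (SIGMA a:{c..n}. {1..n div a^2})"
  proof
    fix x assume "x \<in> Q1"
    then obtain a p where x: "x = (a,p)" "2 \<le> a" "prime p" "p * a^2 < n" "c \<le> a"
      unfolding Q1_def Q_def by auto
    from \<open>x \<in> Q1\<close> have "x \<in> {..<n} \<times> {..<n}" using Qsub unfolding Q1_def by auto
    then have an: "a \<le> n" using x by auto
    have p1: "p \<ge> 1" using x(3) prime_ge_1_nat by auto
    have "p \<le> n div a^2" using x(2,4) by (subst less_eq_div_iff_mult_less_eq) auto
    then show "x \<in> (SIGMA a:{c..n}. {1..n div a^2})" using x an p1 by auto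
  qed
  have "card Q1 \<le> card (SIGMA a:{c..n}. {1..n div a^2})"
    by (intro card_mono Q1sub) auto
  also have "\<dots> = (\<Sum>a\<in>{c..n}. n div a^2)" by simp
  finally have "real (card Q1) \<le> real (\<Sum>a\<in>{c..n}. n div a^2)"
    by (rule of_nat_mono)
  then have "real (card Q1) \<le> (\<Sum>a\<in>{c..n}. real (n div a^2))"
    unfolding of_nat_sum .
  also have "\<dots> \<le> (\<Sum>a\<in>{c..n}. real n * (1 / real a ^ 2))"
  proof (intro sum_mono)
    fix a show "real (n div a^2) \<le> real n * (1 / real a ^ 2)"
      using of_nat_div_le_of_nat[of n "a^2", where ?'a=real] by simp
  qed
  also have "\<dots> = real n * (\<Sum>a\<in>{c..n}. 1 / real a ^ 2)" by (simp add: sum_distrib_left)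
  also have "\<dots> \<le> real n * (1 / (real c - 1))"
    using inv_sq_tail[of c n] c4 by (intro mult_left_mono) auto
  also have "\<dots> \<le> real n * (1 / (M - 1))"
    using cM M by (intro mult_left_mono divide_left_mono) auto
  finally have c1: "real (card Q1) \<le> real n / (M - 1)" by simp

  have Q2sub: "Q2 \<subseteq> {..<c} \<times> {..nat \<lfloor>X\<rfloor>}"
  proof
    fix x assume "x \<in> Q2"
    then obtain a p where x: "x = (a,p)" "a < c" "real p \<le> X" unfolding Q2_def
      by (cases x) auto
    have "p \<le> nat \<lfloor>X\<rfloor>" using x(3) by (simp add: le_nat_floor)
    then show "x \<in> {..<c} \<times> {..nat \<lfloor>X\<rfloor>}" using x by auto
  qed
  have "card Q2 \<le> c * (nat \<lfloor>X\<rfloor> + 1)"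
    using card_mono[OF _ Q2sub] by (simp add: card_cartesian_product)
  then have "real (card Q2) \<le> real (c * (nat \<lfloor>X\<rfloor> + 1))"
    by (rule of_nat_mono)
  then have "real (card Q2) \<le> real c * (real (nat \<lfloor>X\<rfloor>) + 1)"
    unfolding of_nat_mult of_nat_add of_nat_1 .
  also have "\<dots> \<le> (M + 1) * (X + 1)"
    using cM X by (intro mult_mono) auto
  finally have c2: "real (card Q2) \<le> (X + 1) * (M + 1)" by (simp add: mult.commute)

  have lX: "ln X > 0" using X by simp
  have "real (card Q3) * ln X \<le> (\<Sum>x\<in>Q3. ln (real (snd x)))"
    using sum_bounded_below[of Q3 "ln X" "\<lambda>x. ln (real (snd x))"] X
    unfolding Q3_def by auto
  also have "\<dots> \<le> (\<Sum>x\<in>(SIGMA a:{2..<c}. {p. p \<le> n div a^2 \<and> prime p}). ln (real (snd x)))"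
  proof (intro sum_mono2)
    show "Q3 \<subseteq> (SIGMA a:{2..<c}. {p. p \<le> n div a^2 \<and> prime p})"
    proof
      fix x assume "x \<in> Q3"
      then obtain a p where x: "x = (a,p)" "2 \<le> a" "prime p" "p * a^2 < n" "a < c"
        unfolding Q3_def Q_def by auto
      have "p \<le> n div a^2" using x(2,4) by (subst less_eq_div_iff_mult_less_eq) auto
      then show "x \<in> (SIGMA a:{2..<c}. {p. p \<le> n div a^2 \<and> prime p})" using x by auto
    qed
    show "0 \<le> ln (real (snd x))" if "x \<in> (SIGMA a:{2..<c}. {p. p \<le> n div a^2 \<and> prime p}) - Q3" for x
      using that prime_ge_1_nat by auto
  qed auto
  also have "\<dots> = (\<Sum>a\<in>{2..<c}. \<Sum>p\<in>{p. p \<le> n div a^2 \<and> prime p}. ln (real p))"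
    by (subst sum.Sigma) (auto simp: case_prod_beta)
  also have "\<dots> \<le> (\<Sum>a\<in>{2..<c}. psi (n div a^2))"
    by (intro sum_mono theta_le_psi)
  also have "\<dots> \<le> (\<Sum>a\<in>{2..<c}. 6/5 * Acon * real n * (1 / real a ^ 2) + 30 * sqrt n)"
  proof (intro sum_mono)
    fix a assume a: "a \<in> {2..<c}"
    have A: "Acon > 0" by (rule Acon_pos)
    have d: "real (n div a^2) \<le> real n / real a ^ 2"
      using of_nat_div_le_of_nat[of n "a^2"] by simp
    have "psi (n div a^2) \<le> 6/5 * Acon * real (n div a^2) + 30 * sqrt (real (n div a^2))"
      by (rule psi_upper)
    also have "\<dots> \<le> 6/5 * Acon * (real n / real a ^ 2) + 30 * sqrt n"
      using d A by (intro add_mono mult_left_mono real_sqrt_le_mono) auto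
    finally show "psi (n div a^2) \<le> 6/5 * Acon * real n * (1 / real a ^ 2) + 30 * sqrt n" by simp
  qed
  also have "\<dots> = 6/5 * Acon * real n * (\<Sum>a\<in>{2..<c}. 1 / real a ^ 2) + 30 * sqrt n * real (c - 2)"
    by (simp add: sum.distrib sum_distrib_left)
  also have "\<dots> \<le> 6/5 * Acon * real n * (25/36) + 30 * sqrt n * (M + 1)"
  proof (intro add_mono mult_left_mono)
    show "(\<Sum>a\<in>{2..<c}. 1 / real a ^ 2) \<le> 25/36" using inv_sq_head[OF c4] .
    show "real (c - 2) \<le> M + 1" using cM c4 by (simp add: of_nat_diff)
    show "0 \<le> 6/5 * Acon * real n" using Acon_pos by simp
  qed auto
  finally have "real (card Q3) * ln X \<le> 5/6 * Acon * real n + 30 * (M + 1) * sqrt n"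
    by (simp add: algebra_simps)
  then have c3: "real (card Q3) \<le> (5/6 * Acon * real n + 30 * (M + 1) * sqrt n) / ln X"
    using lX by (simp add: field_simps)

  have "real (card {m. m < n \<and> SP m}) \<le> real (card Q1 + card Q2 + card Q3)"
    using le_trans[OF cSP cQ] by (rule of_nat_mono)
  then have "real (card {m. m < n \<and> SP m}) \<le> real (card Q1) + real (card Q2) + real (card Q3)"
    unfolding of_nat_add .
  then show ?thesis using c1 c2 c3 by linarith
qed



lemma limP: "((\<lambda>x::real. (x / (ln x ^ 2 - 1) + (x / ln x ^ 4 + 1) * (ln x ^ 2 + 1)
     + 30 * (ln x ^ 2 + 1) * sqrt x / ln (x / ln x ^ 4)) * ln x / x) \<longlongrightarrow> 0) at_top"
  by real_asymp

lemma limQ: "((\<lambda>x::real. (x / ln (x / ln x ^ 4)) * ln x / x) \<longlongrightarrow> 1) at_top"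
  by real_asymp

lemma limR: "((\<lambda>x::real. (x - 1) / x) \<longlongrightarrow> 1) at_top"
  by real_asymp

lemma limS: "((\<lambda>x::real. 5 * (ln x + 1) / x) \<longlongrightarrow> 0) at_top"
  by real_asymp

lemma evs: "eventually (\<lambda>x::real. x > 2 \<and> ln x > 2 \<and> x / ln x ^ 4 > 1 \<and> ln (x / ln x ^ 4) > 0) at_top"
proof -
  have 1: "eventually (\<lambda>x::real. x > 2) at_top" by real_asymp
  have 2: "eventually (\<lambda>x::real. ln x > 2) at_top" by real_asymp
  have 3: "eventually (\<lambda>x::real. x / ln x ^ 4 > 1) at_top" by real_asymp
  have 4: "eventually (\<lambda>x::real. ln (x / ln x ^ 4) > 0) at_top" by real_asymp
  show ?thesis using eventually_conj[OF 1 eventually_conj[OF 2 eventually_conj[OF 3 4]]] .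
qed


definition LHS :: "real \<Rightarrow> real" where
  "LHS x = x / (ln x ^ 2 - 1) + (x / ln x ^ 4 + 1) * (ln x ^ 2 + 1)
           + (5/6 * Acon * x + 30 * (ln x ^ 2 + 1) * sqrt x) / ln (x / ln x ^ 4)"

definition RHS :: "real \<Rightarrow> real" where
  "RHS x = (Acon * (x - 1) - 5 * (ln x + 1)) / ln x"

lemma ev_main: "eventually (\<lambda>x::real. LHS x < RHS x \<and> x > 2 \<and> ln x > 2 \<and> x / ln x ^ 4 > 1) at_top"
proof -
  define P where "P = (\<lambda>x::real. (x / (ln x ^ 2 - 1) + (x / ln x ^ 4 + 1) * (ln x ^ 2 + 1)
     + 30 * (ln x ^ 2 + 1) * sqrt x / ln (x / ln x ^ 4)) * ln x / x)"
  define Q where "Q = (\<lambda>x::real. (x / ln (x / ln x ^ 4)) * ln x / x)"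
  define R where "R = (\<lambda>x::real. (x - 1) / x)"
  define S where "S = (\<lambda>x::real. 5 * (ln x + 1) / x)"
  have "((\<lambda>x. P x + 5/6 * Acon * Q x - (Acon * R x - S x)) \<longlongrightarrow> 0 + 5/6 * Acon * 1 - (Acon * 1 - 0)) at_top"
    unfolding P_def Q_def R_def S_def
    by (intro tendsto_intros limP limQ limR limS)
  moreover have "0 + 5/6 * Acon * 1 - (Acon * 1 - 0) < 0" using Acon_pos by simp
  ultimately have ev1: "eventually (\<lambda>x. P x + 5/6 * Acon * Q x - (Acon * R x - S x) < 0) at_top"
    by (rule order_tendstoD(2))
  show ?thesis using eventually_conj[OF ev1 evs]
  proof (rule eventually_mono)
    fix x assume h: "P x + 5/6 * Acon * Q x - (Acon * R x - S x) < 0 \<and>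
      x > 2 \<and> ln x > 2 \<and> x / ln x ^ 4 > 1 \<and> ln (x / ln x ^ 4) > 0"
    then have x: "x > 2" and L: "ln x > 2" and d: "ln (x / ln x ^ 4) > 0" by auto
    have e1: "LHS x * ln x / x = P x + 5/6 * Acon * Q x"
      unfolding LHS_def P_def Q_def using x L d by (simp add: field_simps)
    have e2: "RHS x * ln x / x = Acon * R x - S x"
      unfolding RHS_def R_def S_def using x L by (simp add: field_simps)
    have "LHS x * ln x / x < RHS x * ln x / x" using h e1 e2 by linarith
    then have "LHS x < RHS x" using x L by (simp add: divide_less_cancel mult_less_cancel_right)
    then show "LHS x < RHS x \<and> x > 2 \<and> ln x > 2 \<and> x / ln x ^ 4 > 1" using h by auto
  qed
qed

theorem corollary1:
  shows "\<forall>\<^sub>F n in sequentially.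
           card {m::nat. m < n \<and> SP m} < card {p::nat. p < n \<and> prime p}"
proof -
  have ev: "eventually (\<lambda>n::nat. LHS (real n) < RHS (real n) \<and> real n > 2 \<and> ln (real n) > 2
      \<and> real n / ln (real n) ^ 4 > 1) sequentially"
    by (rule eventually_compose_filterlim[OF ev_main filterlim_real_sequentially])
  then show ?thesis
  proof (rule eventually_mono)
    fix n :: nat
    assume h: "LHS (real n) < RHS (real n) \<and> real n > 2 \<and> ln (real n) > 2
      \<and> real n / ln (real n) ^ 4 > 1"
    define x where "x = real n"
    have n2: "n \<ge> 2" using h by simp
    have L: "ln x > 2" and X: "x / ln x ^ 4 > 1" using h unfolding x_def by auto
    have M: "ln x ^ 2 \<ge> 4"
    proof -
      have "(2::real) ^ 2 \<le> ln x ^ 2" using L by (intro power_mono) auto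
      then show ?thesis by simp
    qed
    have c1: "real (card {m. m < n \<and> SP m}) \<le> LHS x"
      using SP_count[OF M X, of n] unfolding LHS_def x_def by simp
    have "psi (n - 1) \<le> real (card {p. p < n \<and> prime p}) * ln x"
      using pi_lower[OF n2] unfolding x_def .
    moreover have "Acon * real (n - 1) - 5 * (ln (real (n - 1) + 1) + 1) \<le> psi (n - 1)"
      by (rule psi_lower)
    moreover have "real (n - 1) = x - 1" using n2 unfolding x_def by (simp add: of_nat_diff)
    ultimately have "Acon * (x - 1) - 5 * (ln x + 1) \<le> real (card {p. p < n \<and> prime p}) * ln x"
      by simp
    then have c2: "RHS x \<le> real (card {p. p < n \<and> prime p})"
      unfolding RHS_def using L by (simp add: divide_le_eq)
    have "real (card {m. m < n \<and> SP m}) < real (card {p. p < n \<and> prime p})"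
      using c1 c2 h unfolding x_def by linarith
    then show "card {m. m < n \<and> SP m} < card {p. p < n \<and> prime p}" by simp
  qed
qed


end
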